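(* Let $R$ be any binary relation on $U$. Then $\mathrm{DM(RS)}$ is a subdirect product of the complete lattices $\wp(U)^{\blacktriangledown}$ and $\wp(U)^{\blacktriangle}$; that is, $\mathrm{DM(RS)}$ is a complete sublattice of $\wp(U)^{\blacktriangledown}\times\wp(U)^{\blacktriangle}$ and both canonical projections restricted to $\mathrm{DM(RS)}$ are surjective onto $\wp(U)^{\blacktriangledown}$ and $\wp(U)^{\blacktriangle}$ respectively.
   Context: Let $U$ be a set and $R\subseteq U\times U$ a binary relation. For $x\in U$, $R(x)=\{y\in U\mid (x,y)\in R\}$ and $\breve R(x)=\{y\in U\mid (y,x)\in R\}$. For $X\subseteq U$: $X^{\blacktriangledown}=\{x\in U\mid R(x)\subseteq X\}$, $X^{\blacktriangle}=\{x\in U\mid R(x)\cap X\neq\emptyset\}$, $X^{\triangledown}=\{x\in U\mid \breve R(x)\subseteq X\}$, $X^{\vartriangle}=\{x\in U\mid \breve R(x)\cap X\neq\emptyset\}$; composites like $X^{\vartriangle\blacktriangledown}$ mean $(X^{\vartriangle})^{\blacktriangledown}$. $\wp(U)^{\blacktriangledown}=\{X^{\blacktriangledown}\mid X\subseteq U\}$ is a complete lattice under $\subseteq$ with meets $\bigcap$ and joins $(\bigcup_i X_i)^{\vartriangle\blacktriangledown}$; $\wp(U)^{\blacktriangle}=\{X^{\blacktriangle}\mid X\subseteq U\}$ is a complete lattice with joins $\bigcup$ and meets $(\bigcap_iY_i)^{\triangledown\blacktriangle}$; their product is ordered coordinatewise. $\mathcal S=\{x\in U\mid |R(x)|=1\}$.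 $\mathrm{RS}=\{(X^{\blacktriangledown},X^{\blacktriangle})\mid X\subseteq U\}$ ordered coordinatewise; $\mathrm{DM(RS)}$ is its Dedekind–MacNeille completion, identified with $\{(A,B)\in\wp(U)^{\blacktriangledown}\times\wp(U)^{\blacktriangle}\mid A^{\vartriangle\blacktriangle}\subseteq B,\ A\cap\mathcal S=B\cap\mathcal S\}$, whose arbitrary meets and joins are $\bigwedge_i(X_i,Y_i)=(\bigcap_iX_i,(\bigcap_iY_i)^{\triangledown\blacktriangle})$ and $\bigvee_i(X_i,Y_i)=((\bigcup_iX_i)^{\vartriangle\blacktriangledown},\bigcup_iY_i)$. *)

theory Defs
  imports Main
begin

definition nbr :: "('a \<times> 'a) set \<Rightarrow> 'a \<Rightarrow> 'a set" where
  "nbr R x = {y. (x, y) \<in> R}"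

definition inbr :: "('a \<times> 'a) set \<Rightarrow> 'a \<Rightarrow> 'a set" where
  "inbr R x = {y. (y, x) \<in> R}"

definition lowR :: "'a set \<Rightarrow> ('a \<times> 'a) set \<Rightarrow> 'a set \<Rightarrow> 'a set" where
  "lowR U R X = {x \<in> U. nbr R x \<subseteq> X}"

definition uppR :: "'a set \<Rightarrow> ('a \<times> 'a) set \<Rightarrow> 'a set \<Rightarrow> 'a set" where
  "uppR U R X = {x \<in> U. nbr R x \<inter> X \<noteq> {}}"

definition lowRi :: "'a set \<Rightarrow> ('a \<times> 'a) set \<Rightarrow> 'a set \<Rightarrow> 'a set" where
  "lowRi U R X = {x \<in> U. inbr R x \<subseteq> X}"

definition uppRi :: "'a set \<Rightarrow> ('a \<times> 'a) set \<Rightarrow> 'a set \<Rightarrow> 'a set" where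
  "uppRi U R X = {x \<in> U. inbr R x \<inter> X \<noteq> {}}"

definition LowSets :: "'a set \<Rightarrow> ('a \<times> 'a) set \<Rightarrow> 'a set set" where
  "LowSets U R = {lowR U R X | X. X \<subseteq> U}"

definition UppSets :: "'a set \<Rightarrow> ('a \<times> 'a) set \<Rightarrow> 'a set set" where
  "UppSets U R = {uppR U R X | X. X \<subseteq> U}"

definition Sing :: "'a set \<Rightarrow> ('a \<times> 'a) set \<Rightarrow> 'a set" where
  "Sing U R = {x \<in> U. \<exists>y. nbr R x = {y}}"

(* DM(RS), in the identification given in the paper *)
definition DMRS :: "'a set \<Rightarrow> ('a \<times> 'a) set \<Rightarrow> ('a set \<times> 'a set) set" where
  "DMRS U R = {(A, B). A \<in> LowSets U R \<and> B \<in> UppSets U R \<and>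
                 uppR U R (uppRi U R A) \<subseteq> B \<and> A \<inter> Sing U R = B \<inter> Sing U R}"

text \<open>Arbitrary meets and joins in the product lattice
  wp(U)^{blacktriangledown} x wp(U)^{blacktriangle}, coordinatewise
  (the empty meet is the top element; intersections are taken inside U).\<close>

definition prodMeet :: "'a set \<Rightarrow> ('a \<times> 'a) set \<Rightarrow> ('a set \<times> 'a set) set \<Rightarrow> 'a set \<times> 'a set" where
  "prodMeet U R F = (U \<inter> \<Inter>(fst ` F), uppR U R (lowRi U R (U \<inter> \<Inter>(snd ` F))))"

definition prodJoin :: "'a set \<Rightarrow> ('a \<times> 'a) set \<Rightarrow> ('a set \<times> 'a set) set \<Rightarrow> 'a set \<times> 'a set" where
  "prodJoin U R F = (lowR U R (uppRi U R (\<Union>(fst ` F))), \<Union>(snd ` F))"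

end

theory Submission
  imports Defs
begin

lemma low_mem: "A \<subseteq> U \<Longrightarrow> lowR U R (uppRi U R A) \<subseteq> A \<Longrightarrow> R \<subseteq> U \<times> U \<Longrightarrow> A \<in> LowSets U R"
  unfolding LowSets_def
  apply (rule CollectI, rule exI[of _ "uppRi U R A"])
  apply (auto simp: lowR_def uppRi_def nbr_def inbr_def)
  done

lemma low_fix: "A \<in> LowSets U R \<Longrightarrow> x \<in> A \<Longrightarrow> (x,y) \<in> R \<Longrightarrow> (z,y) \<in> R \<Longrightarrow> z \<in> U \<Longrightarrow> (z,w) \<in> R \<Longrightarrow> y \<in> U \<Longrightarrow> True"
  by simp

lemma pair_in: "R \<subseteq> U \<times> U \<Longrightarrow> X \<subseteq> U \<Longrightarrow> (lowR U R X, uppR U R X) \<in> DMRS U R"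
  unfolding DMRS_def LowSets_def UppSets_def
  by (auto simp: lowR_def uppR_def uppRi_def Sing_def nbr_def inbr_def set_eq_iff; metis)

lemma meet_in:
  assumes R: "R \<subseteq> U \<times> U" and F: "F \<subseteq> DMRS U R"
  shows "prodMeet U R F \<in> DMRS U R"
proof -
  define A where "A = U \<inter> \<Inter>(fst ` F)"
  define Y where "Y = U \<inter> \<Inter>(snd ` F)"
  have Fa: "\<And>a b. (a,b) \<in> F \<Longrightarrow> \<exists>X. a = lowR U R X \<and> X \<subseteq> U" using F
    by (auto simp: DMRS_def LowSets_def)
  have Fb: "\<And>a b. (a,b) \<in> F \<Longrightarrow> uppR U R (uppRi U R a) \<subseteq> b" using F
    by (auto simp: DMRS_def)
  have Fs: "\<And>a b. (a,b) \<in> F \<Longrightarrow> a \<inter> Sing U R = b \<inter> Sing U R" using F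
    by (auto simp: DMRS_def)
  have "A \<in> LowSets U R"
  proof (rule low_mem[OF _ _ R])
    show "A \<subseteq> U" by (auto simp: A_def)
    show "lowR U R (uppRi U R A) \<subseteq> A"
    proof
      fix x assume x: "x \<in> lowR U R (uppRi U R A)"
      { fix a b assume ab: "(a,b) \<in> F"
        then obtain X where X: "a = lowR U R X" by (metis Fa)
        have "x \<in> a" unfolding X lowR_def
        proof (intro CollectI conjI subsetI)
          show "x \<in> U" using x by (auto simp: lowR_def)
          fix y assume "y \<in> nbr R x"
          hence "y \<in> uppRi U R A" using x by (auto simp: lowR_def)
          then obtain w where w: "w \<in> A" "(w,y) \<in> R" by (auto simp: uppRi_def inbr_def)
          hence "w \<in> a" using ab by (auto simp: A_def)
          thus "y \<in> X" using w X by (auto simp: lowR_def nbr_def)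
        qed }
      then show "x \<in> A" using x by (auto simp: A_def lowR_def)
    qed
  qed
  moreover have "uppR U R (lowRi U R Y) \<in> UppSets U R"
    by (auto simp: UppSets_def lowRi_def)
  moreover have "uppR U R (uppRi U R A) \<subseteq> uppR U R (lowRi U R Y)"
  proof
    fix x assume "x \<in> uppR U R (uppRi U R A)"
    then obtain y where x: "x \<in> U" "(x,y) \<in> R" "y \<in> uppRi U R A"
      by (auto simp: uppR_def nbr_def)
    have "y \<in> lowRi U R Y"
    proof -
      { fix z assume zy: "(z,y) \<in> R"
        { fix a b assume ab: "(a,b) \<in> F"
          obtain w where w: "w \<in> A" "(w,y) \<in> R" using x(3) by (auto simp: uppRi_def inbr_def)
          have "w \<in> a" using w(1) ab by (auto simp: A_def)
          hence "y \<in> uppRi U R a" using w R by (auto simp: uppRi_def inbr_def)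
          hence "z \<in> uppR U R (uppRi U R a)" using zy R
            by (auto simp: uppR_def nbr_def)
          hence "z \<in> b" using Fb ab by blast }
        hence "z \<in> Y" using zy R by (auto simp: Y_def) }
      thus ?thesis using x(3) by (auto simp: lowRi_def uppRi_def inbr_def)
    qed
    thus "x \<in> uppR U R (lowRi U R Y)" using x by (auto simp: uppR_def nbr_def)
  qed
  moreover have "A \<inter> Sing U R = uppR U R (lowRi U R Y) \<inter> Sing U R"
  proof (intro equalityI subsetI)
    fix x assume xx: "x \<in> A \<inter> Sing U R"
    then obtain y where y: "nbr R x = {y}" "x \<in> U" by (auto simp: Sing_def)
    have xy: "(x,y) \<in> R" using y by (auto simp: nbr_def)
    have "y \<in> lowRi U R Y"
    proof -
      { fix z assume zy: "(z,y) \<in> R"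
        { fix a b assume ab: "(a,b) \<in> F"
          obtain X where X: "a = lowR U R X" "X \<subseteq> U" using Fa ab by blast
          have "x \<in> a" using xx ab by (auto simp: A_def)
          hence "y \<in> uppRi U R a" using xy R by (auto simp: uppRi_def inbr_def)
          hence "z \<in> uppR U R (uppRi U R a)" using zy R
            by (auto simp: uppR_def nbr_def)
          hence "z \<in> b" using Fb ab by blast }
        hence "z \<in> Y" using zy R by (auto simp: Y_def) }
      thus ?thesis using xy R by (auto simp: lowRi_def inbr_def)
    qed
    thus "x \<in> uppR U R (lowRi U R Y) \<inter> Sing U R" using xx xy y
      by (auto simp: uppR_def nbr_def)
  next
    fix x assume xx: "x \<in> uppR U R (lowRi U R Y) \<inter> Sing U R"
    then obtain y where y: "nbr R x = {y}" "x \<in> U" by (auto simp: Sing_def)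
    have "y \<in> lowRi U R Y" using xx y by (auto simp: uppR_def)
    moreover have "(x,y) \<in> R" using y by (auto simp: nbr_def)
    ultimately have "x \<in> Y" by (auto simp: lowRi_def inbr_def)
    hence "\<And>a b. (a,b) \<in> F \<Longrightarrow> x \<in> a"
    proof -
      fix a b assume ab: "(a,b) \<in> F" and "x \<in> Y"
      hence "x \<in> b" unfolding Y_def by force
      thus "x \<in> a" using Fs[OF ab] xx by blast
    qed
    thus "x \<in> A \<inter> Sing U R" using xx y by (auto simp: A_def)
  qed
  ultimately show ?thesis
    by (simp add: prodMeet_def DMRS_def A_def Y_def)
qed

lemma join_in:
  assumes R: "R \<subseteq> U \<times> U" and F: "F \<subseteq> DMRS U R"
  shows "prodJoin U R F \<in> DMRS U R"
proof -
  define W where "W = \<Union>(fst ` F)"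
  define A where "A = lowR U R (uppRi U R W)"
  define B where "B = \<Union>(snd ` F)"
  have Fb: "\<And>a b. (a,b) \<in> F \<Longrightarrow> uppR U R (uppRi U R a) \<subseteq> b" using F
    by (auto simp: DMRS_def)
  have Fs: "\<And>a b. (a,b) \<in> F \<Longrightarrow> a \<inter> Sing U R = b \<inter> Sing U R" using F
    by (auto simp: DMRS_def)
  have Fu: "\<And>a b. (a,b) \<in> F \<Longrightarrow> \<exists>X. b = uppR U R X \<and> X \<subseteq> U" using F
    by (auto simp: DMRS_def UppSets_def)
  have "A \<in> LowSets U R" unfolding A_def LowSets_def by (auto simp: uppRi_def)
  moreover have "B \<in> UppSets U R"
    unfolding UppSets_def
  proof (intro CollectI exI conjI)
    show "lowRi U R B \<subseteq> U" by (auto simp: lowRi_def)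
    show "B = uppR U R (lowRi U R B)"
    proof (intro equalityI subsetI)
      fix x assume "x \<in> B"
      then obtain a b where ab: "(a,b) \<in> F" "x \<in> b" by (auto simp: B_def)
      then obtain X where X: "b = uppR U R X" "X \<subseteq> U" using Fu by blast
      then obtain y where y: "x \<in> U" "(x,y) \<in> R" "y \<in> X" using ab
        by (auto simp: uppR_def nbr_def)
      have "y \<in> lowRi U R B"
      proof -
        { fix z assume "(z,y) \<in> R"
          hence "z \<in> b" using X y R by (auto simp: uppR_def nbr_def)
          hence "z \<in> B" using ab unfolding B_def by force }
        thus ?thesis using y X by (auto simp: lowRi_def inbr_def)
      qed
      thus "x \<in> uppR U R (lowRi U R B)" using y by (auto simp: uppR_def nbr_def)
    next
      fix x assume x: "x \<in> uppR U R (lowRi U R B)"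
      then obtain y where y: "x \<in> U" "(x,y) \<in> R" "y \<in> lowRi U R B"
        by (auto simp: uppR_def nbr_def)
      thus "x \<in> B" by (auto simp: lowRi_def inbr_def)
    qed
  qed
  moreover have "uppR U R (uppRi U R A) \<subseteq> B"
  proof
    fix x assume "x \<in> uppR U R (uppRi U R A)"
    then obtain y z where yz: "x \<in> U" "(x,y) \<in> R" "z \<in> A" "(z,y) \<in> R"
      by (auto simp: uppR_def uppRi_def nbr_def inbr_def)
    hence "y \<in> uppRi U R W" by (auto simp: A_def lowR_def nbr_def)
    then obtain a b w where ab: "(a,b) \<in> F" "w \<in> a" "(w,y) \<in> R"
      by (auto simp: uppRi_def inbr_def W_def)
    hence "x \<in> uppR U R (uppRi U R a)" using yz R
      by (auto simp: uppR_def uppRi_def nbr_def inbr_def)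
    hence "x \<in> b" using Fb ab by blast
    thus "x \<in> B" using ab unfolding B_def by force
  qed
  moreover have "A \<inter> Sing U R = B \<inter> Sing U R"
  proof (intro equalityI subsetI)
    fix x assume xx: "x \<in> A \<inter> Sing U R"
    then obtain y where y: "nbr R x = {y}" "x \<in> U" by (auto simp: Sing_def)
    have xy: "(x,y) \<in> R" using y by (auto simp: nbr_def)
    have "y \<in> uppRi U R W" using xx xy by (auto simp: A_def lowR_def nbr_def)
    then obtain a b w where ab: "(a,b) \<in> F" "w \<in> a" "(w,y) \<in> R"
      by (auto simp: uppRi_def inbr_def W_def)
    hence "x \<in> uppR U R (uppRi U R a)" using xy y R
      by (auto simp: uppR_def uppRi_def nbr_def inbr_def)
    hence "x \<in> b" using Fb ab by blast
    thus "x \<in> B \<inter> Sing U R" using ab xx unfolding B_def by force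
  next
    fix x assume xx: "x \<in> B \<inter> Sing U R"
    then obtain y where y: "nbr R x = {y}" "x \<in> U" by (auto simp: Sing_def)
    have xy: "(x,y) \<in> R" using y by (auto simp: nbr_def)
    obtain a b where ab: "(a,b) \<in> F" "x \<in> b" using xx by (auto simp: B_def)
    hence "x \<in> a" using Fs xx by blast
    hence "x \<in> W" using ab unfolding W_def by force
    hence "y \<in> uppRi U R W" using xy R by (auto simp: uppRi_def inbr_def)
    hence "x \<in> A" using y by (auto simp: A_def lowR_def)
    thus "x \<in> A \<inter> Sing U R" using xx by blast
  qed
  ultimately show ?thesis
    by (simp add: prodJoin_def DMRS_def A_def B_def W_def)
qed

theorem mainTheorem18:
  fixes U :: "'a set" and R :: "('a \<times> 'a) set"
  assumes "R \<subseteq> U \<times> U"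
  shows "DMRS U R \<subseteq> LowSets U R \<times> UppSets U R
     \<and> (\<forall>F. F \<subseteq> DMRS U R \<longrightarrow> prodMeet U R F \<in> DMRS U R \<and> prodJoin U R F \<in> DMRS U R)
     \<and> fst ` DMRS U R = LowSets U R
     \<and> snd ` DMRS U R = UppSets U R"
proof (intro conjI allI impI)
  show "DMRS U R \<subseteq> LowSets U R \<times> UppSets U R" by (auto simp: DMRS_def)
  show "prodMeet U R F \<in> DMRS U R" if "F \<subseteq> DMRS U R" for F
    using meet_in[OF assms that] .
  show "prodJoin U R F \<in> DMRS U R" if "F \<subseteq> DMRS U R" for F
    using join_in[OF assms that] .
  show "fst ` DMRS U R = LowSets U R"
  proof
    show "fst ` DMRS U R \<subseteq> LowSets U R" by (auto simp: DMRS_def)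
    show "LowSets U R \<subseteq> fst ` DMRS U R"
    proof
      fix A assume "A \<in> LowSets U R"
      then obtain X where X: "A = lowR U R X" "X \<subseteq> U" by (auto simp: LowSets_def)
      show "A \<in> fst ` DMRS U R" using pair_in[OF assms X(2)] X(1)
        by (metis fst_conv image_eqI)
    qed
  qed
  show "snd ` DMRS U R = UppSets U R"
  proof
    show "snd ` DMRS U R \<subseteq> UppSets U R" by (auto simp: DMRS_def)
    show "UppSets U R \<subseteq> snd ` DMRS U R"
    proof
      fix B assume "B \<in> UppSets U R"
      then obtain X where X: "B = uppR U R X" "X \<subseteq> U" by (auto simp: UppSets_def)
      show "B \<in> snd ` DMRS U R" using pair_in[OF assms X(2)] X(1)
        by (metis snd_conv image_eqI)
    qed
  qed
qed

end
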